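(* Let $P \in S$ have degree $n$ in $x$, where $n$ is a prime number. Let $p_n$ be the leading coefficient of $P$ and $\rho = \deg_y(p_n)$, and let $s = \deg_y(\sigma(y))$. If $\sum_{i=0}^{n-1} s^i$ does not divide $\rho$, then $C_S(P) = K[P]$.
   Context: Standing conventions: $K$ is a field, $R = K[y]$, $\sigma$ is a $K$-algebra endomorphism of $R$ with $\deg_y(\sigma(y)) > 1$, and $\delta$ is a $K$-linear $\sigma$-derivation of $R$ ($\delta(ab) = \sigma(a)\delta(b) + \delta(a)b$). $S = R[x;\sigma,\delta]$ is the Ore extension (polynomials $\sum r_i x^i$, $r_i\in R$, with $xr = \sigma(r)x + \delta(r)$). Degree of an element of $S$ means degree in $x$; its leading coefficient is the coefficient in $K[y]$ of the highest power of $x$. $C_S(P)$ is the centralizer of $P$ in $S$, and $K[P] = \{\sum_i c_i P^i : c_i \in K\}$. *)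

theory Defs
  imports "HOL-Computational_Algebra.Polynomial" "HOL-Computational_Algebra.Primes"
begin

text \<open>Elements of the Ore extension S = R[x;sigma,delta], R = K[y], are represented as
  polynomials in x with coefficients in K[y], i.e. of type 'a poly poly, written
  sum r_i x^i with coefficients on the left. Degree / leading coefficient are
  the usual ones of the outer polynomial (degree in x).\<close>

definition ore_endo :: "('a::field poly \<Rightarrow> 'a poly) \<Rightarrow> bool" where
  "ore_endo \<sigma> \<longleftrightarrow>
     (\<forall>a b. \<sigma> (a + b) = \<sigma> a + \<sigma> b) \<and>
     (\<forall>a b. \<sigma> (a * b) = \<sigma> a * \<sigma> b) \<and>
     \<sigma> 1 = 1 \<and>
     (\<forall>c. \<sigma> [:c:] = [:c:])"

definition ore_sigma_derivation ::
    "('a::field poly \<Rightarrow> 'a poly) \<Rightarrow> ('a poly \<Rightarrow> 'a poly) \<Rightarrow> bool" where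
  "ore_sigma_derivation \<sigma> \<delta> \<longleftrightarrow>
     (\<forall>a b. \<delta> (a + b) = \<delta> a + \<delta> b) \<and>
     (\<forall>c a. \<delta> (smult c a) = smult c (\<delta> a)) \<and>
     (\<forall>a b. \<delta> (a * b) = \<sigma> a * \<delta> b + \<delta> a * b)"

text \<open>Left multiplication by x: x (sum r_i x^i) = sum (sigma(r_i) x^(i+1) + delta(r_i) x^i).\<close>
definition ore_xmul ::
    "('a::field poly \<Rightarrow> 'a poly) \<Rightarrow> ('a poly \<Rightarrow> 'a poly) \<Rightarrow> 'a poly poly \<Rightarrow> 'a poly poly" where
  "ore_xmul \<sigma> \<delta> g = pCons 0 (map_poly \<sigma> g) + map_poly \<delta> g"

definition ore_mult ::
    "('a::field poly \<Rightarrow> 'a poly) \<Rightarrow> ('a poly \<Rightarrow> 'a poly) \<Rightarrow> 'a poly poly \<Rightarrow> 'a poly poly \<Rightarrow> 'a poly poly" where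
  "ore_mult \<sigma> \<delta> f g = (\<Sum>i\<le>degree f. smult (coeff f i) ((ore_xmul \<sigma> \<delta> ^^ i) g))"

fun ore_pow ::
    "('a::field poly \<Rightarrow> 'a poly) \<Rightarrow> ('a poly \<Rightarrow> 'a poly) \<Rightarrow> 'a poly poly \<Rightarrow> nat \<Rightarrow> 'a poly poly" where
  "ore_pow \<sigma> \<delta> P 0 = 1"
| "ore_pow \<sigma> \<delta> P (Suc k) = ore_mult \<sigma> \<delta> P (ore_pow \<sigma> \<delta> P k)"

definition ore_centralizer ::
    "('a::field poly \<Rightarrow> 'a poly) \<Rightarrow> ('a poly \<Rightarrow> 'a poly) \<Rightarrow> 'a poly poly \<Rightarrow> 'a poly poly set" where
  "ore_centralizer \<sigma> \<delta> P = {Q. ore_mult \<sigma> \<delta> P Q = ore_mult \<sigma> \<delta> Q P}"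

definition ore_Kpoly_in ::
    "('a::field poly \<Rightarrow> 'a poly) \<Rightarrow> ('a poly \<Rightarrow> 'a poly) \<Rightarrow> 'a poly poly \<Rightarrow> 'a poly poly set" where
  "ore_Kpoly_in \<sigma> \<delta> P =
     {Q. \<exists>(c::nat \<Rightarrow> 'a) N. Q = (\<Sum>i<N. smult [:c i:] (ore_pow \<sigma> \<delta> P i))}"

end

theory Submission
  imports Defs
begin


locale ore = fixes \<sigma> \<delta> :: "'a::field poly \<Rightarrow> 'a poly"
  assumes endo: "ore_endo \<sigma>" and der: "ore_sigma_derivation \<sigma> \<delta>"
begin

abbreviation X where "X \<equiv> ore_xmul \<sigma> \<delta>"
abbreviation M where "M \<equiv> ore_mult \<sigma> \<delta>"

lemma s_add: "\<sigma> (a + b) = \<sigma> a + \<sigma> b" and s_mult: "\<sigma> (a * b) = \<sigma> a * \<sigma> b"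
  and s_one: "\<sigma> 1 = 1" and s_const: "\<sigma> [:c:] = [:c:]"
  using endo unfolding ore_endo_def by auto
lemma d_add: "\<delta> (a + b) = \<delta> a + \<delta> b" and d_smult: "\<delta> (smult c a) = smult c (\<delta> a)"
  and d_mult: "\<delta> (a * b) = \<sigma> a * \<delta> b + \<delta> a * b"
  using der unfolding ore_sigma_derivation_def by auto
lemma s_zero[simp]: "\<sigma> 0 = 0" using s_add[of 0 0] by (metis add_cancel_right_right add_0)
lemma d_zero[simp]: "\<delta> 0 = 0" using d_add[of 0 0] by (metis add_cancel_right_right add_0)
lemma d_one[simp]: "\<delta> 1 = 0"
proof -
  have "\<delta> 1 = \<delta> 1 + \<delta> 1" using d_mult[of 1 1] by (simp add: s_one)
  then show ?thesis by (rule add_cancel_right_right[THEN iffD1])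
qed
lemma smult_sum_right: "smult r (sum g A) = (\<Sum>a\<in>A. smult r (g a))"
  using sum_comp_morphism[of "smult r" g A] by (simp add: o_def smult_add_right)
lemma degree_map_le: "f 0 = 0 \<Longrightarrow> degree (map_poly f p) \<le> degree p"
  by (rule degree_le) (simp add: coeff_map_poly coeff_eq_0)
lemma d_const[simp]: "\<delta> [:c:] = 0"
proof -
  have "[:c:] = smult c (1::'a poly)" by simp
  then show ?thesis by (metis d_smult d_one smult_0_right)
qed

lemma map_add: "(\<And>a b. f (a + b) = f a + f b) \<Longrightarrow> f 0 = 0 \<Longrightarrow> map_poly f (p + q) = map_poly f p + map_poly f q"
  by (intro poly_eqI) (simp add: coeff_map_poly)

lemma X_add: "X (a + b) = X a + X b"
  unfolding ore_xmul_def by (simp add: map_add s_add d_add)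
lemma X_zero[simp]: "X 0 = 0" unfolding ore_xmul_def by simp
lemma Xp_add: "(X ^^ i) (a + b) = (X ^^ i) a + (X ^^ i) b"
  by (induct i) (auto simp: X_add)
lemma Xp_zero[simp]: "(X ^^ i) 0 = 0" by (induct i) auto
lemma Xp_sum: "(X ^^ i) (sum g A) = (\<Sum>a\<in>A. (X ^^ i) (g a))"
  using sum_comp_morphism[of "X ^^ i" g A, OF Xp_zero Xp_add] by (simp add: o_def)

lemma X_smult: "X (smult r g) = smult (\<sigma> r) (X g) + smult (\<delta> r) g"
  unfolding ore_xmul_def
  by (intro poly_eqI) (simp add: coeff_map_poly coeff_pCons s_mult d_mult algebra_simps split: nat.splits)

lemma X_smult_const: "X (smult [:c:] g) = smult [:c:] (X g)"
  by (simp add: X_smult s_const)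
lemma Xp_smult_const: "(X ^^ i) (smult [:c:] g) = smult [:c:] ((X ^^ i) g)"
  by (induct i) (auto simp: X_smult_const)

lemma M_range: assumes "degree f \<le> N"
  shows "M f h = (\<Sum>i\<le>N. smult (coeff f i) ((X ^^ i) h))"
  unfolding ore_mult_def
  by (rule sum.mono_neutral_left) (use assms in \<open>auto simp: coeff_eq_0\<close>)

lemma M_add_left: "M (f + g) h = M f h + M g h"
proof -
  let ?N = "max (degree f) (degree g)"
  have "degree (f + g) \<le> ?N" by (simp add: degree_add_le)
  then show ?thesis
    by (simp add: M_range[of _ ?N] smult_add_left sum.distrib)
qed
lemma M_zero_left[simp]: "M 0 h = 0" unfolding ore_mult_def by simp
lemma M_sum_left: "M (sum g A) h = (\<Sum>a\<in>A. M (g a) h)"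
  using sum_comp_morphism[of "\<lambda>u. M u h" g A, OF M_zero_left M_add_left] by (simp add: o_def)
lemma M_add_right: "M f (g + h) = M f g + M f h"
  unfolding ore_mult_def by (simp add: Xp_add smult_add_right sum.distrib)
lemma M_zero_right[simp]: "M f 0 = 0" unfolding ore_mult_def by simp
lemma M_sum_right: "M f (sum g A) = (\<Sum>a\<in>A. M f (g a))"
  using sum_comp_morphism[of "M f" g A, OF M_zero_right M_add_right] by (simp add: o_def)
lemma M_smult_left: "M (smult r f) h = smult r (M f h)"
proof -
  have "degree (smult r f) \<le> degree f" by (rule degree_smult_le)
  then show ?thesis
    by (simp add: M_range[of _ "degree f"] smult_sum_right ore_mult_def)
qed
lemma M_smult_right: "M f (smult [:c:] h) = smult [:c:] (M f h)"
  unfolding ore_mult_def by (simp add: Xp_smult_const smult_sum_right mult.commute)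

lemma X_sum: "X (sum g A) = (\<Sum>a\<in>A. X (g a))"
  using sum_comp_morphism[of X g A, OF X_zero X_add] by (simp add: o_def)

lemma degree_X_le: "degree (X u) \<le> Suc (degree u)"
proof -
  have "degree (map_poly \<sigma> u) \<le> degree u" "degree (map_poly \<delta> u) \<le> degree u"
    by (simp_all add: degree_map_le)
  moreover have "degree (pCons 0 (map_poly \<sigma> u)) \<le> Suc (degree (map_poly \<sigma> u))"
    by (rule degree_pCons_le)
  ultimately show ?thesis unfolding ore_xmul_def
    by (meson degree_add_le le_SucI order.trans Suc_le_mono)
qed

lemma coeff_X: "coeff (X u) i = (case i of 0 \<Rightarrow> 0 | Suc j \<Rightarrow> \<sigma> (coeff u j)) + \<delta> (coeff u i)"
  unfolding ore_xmul_def by (simp add: coeff_map_poly coeff_pCons split: nat.split)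

lemma M_X: "M (X u) h = X (M u h)"
proof -
  define D where "D = degree u"
  have "M (X u) h = (\<Sum>i\<le>Suc D. smult (coeff (X u) i) ((X ^^ i) h))"
    using degree_X_le[of u] by (simp add: M_range D_def)
  also have "\<dots> = (\<Sum>i\<le>Suc D. smult (case i of 0 \<Rightarrow> 0 | Suc j \<Rightarrow> \<sigma> (coeff u j)) ((X ^^ i) h))
      + (\<Sum>i\<le>Suc D. smult (\<delta> (coeff u i)) ((X ^^ i) h))"
    by (simp add: coeff_X smult_add_left sum.distrib)
  also have "(\<Sum>i\<le>Suc D. smult (case i of 0 \<Rightarrow> 0 | Suc j \<Rightarrow> \<sigma> (coeff u j)) ((X ^^ i) h))
     = (\<Sum>j\<le>D. smult (\<sigma> (coeff u j)) (X ((X ^^ j) h)))"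
    by (subst sum.atMost_Suc_shift) simp
  also have "(\<Sum>i\<le>Suc D. smult (\<delta> (coeff u i)) ((X ^^ i) h)) = (\<Sum>j\<le>D. smult (\<delta> (coeff u j)) ((X ^^ j) h))"
    by (simp add: D_def coeff_eq_0)
  also have "(\<Sum>j\<le>D. smult (\<sigma> (coeff u j)) (X ((X ^^ j) h))) + (\<Sum>j\<le>D. smult (\<delta> (coeff u j)) ((X ^^ j) h))
     = (\<Sum>j\<le>D. X (smult (coeff u j) ((X ^^ j) h)))"
    by (simp add: X_smult sum.distrib)
  also have "\<dots> = X (M u h)" unfolding ore_mult_def D_def by (simp add: X_sum)
  finally show ?thesis .
qed

lemma M_Xp: "M ((X ^^ i) u) h = (X ^^ i) (M u h)"
  by (induct i) (auto simp: M_X)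

lemma M_assoc: "M (M f g) h = M f (M g h)"
proof -
  have "M (M f g) h = (\<Sum>i\<le>degree f. M (smult (coeff f i) ((X ^^ i) g)) h)"
    unfolding ore_mult_def[of \<sigma> \<delta> f g] by (simp add: M_sum_left)
  also have "\<dots> = (\<Sum>i\<le>degree f. smult (coeff f i) ((X ^^ i) (M g h)))"
    by (simp add: M_smult_left M_Xp)
  also have "\<dots> = M f (M g h)" unfolding ore_mult_def by simp
  finally show ?thesis .
qed

lemma M_one_left: "M 1 h = h" unfolding ore_mult_def by simp

lemma Xp_one: "(X ^^ i) 1 = monom 1 i"
proof (induct i)
  case 0 then show ?case by (simp add: one_pCons monom_0)
next
  case (Suc i)
  have "X (monom 1 i) = monom 1 (Suc i)"
    unfolding ore_xmul_def
    by (intro poly_eqI) (simp add: coeff_map_poly coeff_pCons coeff_monom s_one split: nat.splits)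
  then show ?case using Suc by simp
qed

lemma M_one_right: "M f 1 = f"
  unfolding ore_mult_def by (simp add: Xp_one smult_monom poly_as_sum_of_monoms')

end

locale ore2 = ore + assumes sdeg: "degree (\<sigma> [:0, 1:]) > 1"
begin

abbreviation s where "s \<equiv> degree (\<sigma> [:0, 1:])"

lemma s_pcomp: "\<sigma> q = pcompose q (\<sigma> [:0, 1:])"
proof (induct q)
  case 0 then show ?case by simp
next
  case (pCons a q)
  have "pCons a q = [:a:] + [:0, 1:] * q" by simp
  then have "\<sigma> (pCons a q) = [:a:] + \<sigma> [:0, 1:] * \<sigma> q" by (metis s_add s_mult s_const)
  then show ?case using pCons by (simp add: pcompose_pCons)
qed

lemma s_deg: "degree (\<sigma> q) = degree q * s"
  by (subst s_pcomp[of q]) (rule degree_pcompose)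

lemma s_nz: assumes "q \<noteq> 0" shows "\<sigma> q \<noteq> 0"
proof
  assume h: "\<sigma> q = 0"
  then have "degree q = 0" using s_deg[of q] sdeg by simp
  then obtain c where "q = [:c:]" by (metis degree_eq_zeroE)
  then show False using h assms s_const by simp
qed

abbreviation S where "S k \<equiv> \<sigma> ^^ k"

lemma S_add: "S k (a + b) = S k a + S k b" by (induct k) (auto simp: s_add)
lemma S_mult: "S k (a * b) = S k a * S k b" by (induct k) (auto simp: s_mult)
lemma S_smult: "S k (smult c a) = smult c (S k a)"
proof (induct k)
  case 0 then show ?case by simp
next
  case (Suc k)
  have "\<sigma> (smult c b) = smult c (\<sigma> b)" for b
    using s_mult[of "[:c:]" b] s_const[of c] by simp
  then show ?case using Suc by simp
qed
lemma S_diff: "S k (a - b) = S k a - S k b"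
proof -
  have "S k (a - b) + S k b = S k a" using S_add[of k "a - b" b] by simp
  then show ?thesis by (simp add: eq_diff_eq)
qed
lemma S_deg: "degree (S k q) = degree q * s ^ k"
proof (induct k)
  case 0 then show ?case by simp
next
  case (Suc k)
  have "degree (S (Suc k) q) = degree (S k q) * s" using s_deg[of "S k q"] by simp
  then show ?case using Suc by simp
qed
lemma S_nz: "q \<noteq> 0 \<Longrightarrow> S k q \<noteq> 0"
  by (induct k) (auto simp: s_nz)

lemma X_deg: assumes "g \<noteq> 0"
  shows "degree (X g) = Suc (degree g) \<and> lead_coeff (X g) = \<sigma> (lead_coeff g)"
proof -
  have nz: "\<sigma> (lead_coeff g) \<noteq> 0" using assms s_nz by simp
  have c: "coeff (X g) (Suc (degree g)) = \<sigma> (lead_coeff g)"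
    by (simp add: coeff_X coeff_eq_0)
  have "degree (X g) = Suc (degree g)"
    using degree_X_le[of g] le_degree[of "X g" "Suc (degree g)"] c nz by simp
  then show ?thesis using c by simp
qed

lemma Xp_deg: assumes "g \<noteq> 0"
  shows "degree ((X ^^ i) g) = degree g + i \<and> lead_coeff ((X ^^ i) g) = S i (lead_coeff g)"
proof (induct i)
  case 0 then show ?case by simp
next
  case (Suc i)
  have "(X ^^ i) g \<noteq> 0" using Suc assms S_nz[of "lead_coeff g" i] by auto
  then have c: "degree (X ((X ^^ i) g)) = Suc (degree ((X ^^ i) g)) \<and> lead_coeff (X ((X ^^ i) g)) = \<sigma> (lead_coeff ((X ^^ i) g))"
    by (rule X_deg)
  show ?case using c Suc by (metis add_Suc_right comp_apply funpow.simps(2))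
qed

lemma M_deg: assumes "f \<noteq> 0" "g \<noteq> 0"
  shows "degree (M f g) = degree f + degree g \<and> lead_coeff (M f g) = lead_coeff f * S (degree f) (lead_coeff g)"
proof -
  define D where "D = degree f"
  have le: "degree (smult (coeff f i) ((X ^^ i) g)) \<le> D + degree g" if "i \<le> D" for i
    using that Xp_deg[OF assms(2), of i] degree_smult_le[of "coeff f i" "(X ^^ i) g"] by simp
  have dle: "degree (M f g) \<le> D + degree g"
    unfolding ore_mult_def D_def[symmetric] by (rule degree_sum_le, simp, rule le, simp)
  have z: "coeff (smult (coeff f i) ((X ^^ i) g)) (D + degree g) = 0" if "i \<le> D" "i \<noteq> D" for i
  proof -
    have "degree (smult (coeff f i) ((X ^^ i) g)) < D + degree g"
      using that Xp_deg[OF assms(2), of i] degree_smult_le[of "coeff f i" "(X ^^ i) g"] by simp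
    then show ?thesis by (rule coeff_eq_0)
  qed
  have "coeff (M f g) (D + degree g) = (\<Sum>i\<le>D. coeff (smult (coeff f i) ((X ^^ i) g)) (D + degree g))"
    unfolding ore_mult_def D_def[symmetric] by (simp add: coeff_sum)
  also have "\<dots> = coeff (smult (coeff f D) ((X ^^ D) g)) (D + degree g)"
    using z by (subst sum.remove[of _ D]) (auto intro!: sum.neutral simp del: coeff_smult)
  also have "\<dots> = coeff f D * S D (lead_coeff g)"
    using Xp_deg[OF assms(2), of D] by (metis add.commute coeff_smult)
  finally have c: "coeff (M f g) (D + degree g) = lead_coeff f * S D (lead_coeff g)" by (simp add: D_def)
  have nz: "lead_coeff f * S D (lead_coeff g) \<noteq> 0" using assms S_nz by simp
  have "degree (M f g) = D + degree g" using dle le_degree[of "M f g" "D + degree g"] c nz by simp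
  then show ?thesis using c D_def by simp
qed

end


definition hs :: "nat \<Rightarrow> nat \<Rightarrow> nat" where "hs s k = (\<Sum>i<k. s ^ i)"

lemma hs_add: "hs s (a + b) = hs s a + s ^ a * hs s b"
  unfolding hs_def by (induct b) (auto simp: algebra_simps power_add)

lemma hs_Suc: "hs s (Suc b) = 1 + s * hs s b"
  using hs_add[of s 1 b] by (simp add: hs_def)

lemma hs_int: "int (s - 1) * int (hs s k) = int s ^ k - 1" if "s \<ge> 1"
proof (induct k)
  case 0 then show ?case by (simp add: hs_def)
next
  case (Suc k)
  have "int (s - 1) * int (hs s (Suc k)) = int (s - 1) + int s * (int (s - 1) * int (hs s k))"
    by (simp add: hs_Suc algebra_simps)
  also have "\<dots> = int (s - 1) + int s * (int s ^ k - 1)" using Suc by simp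
  also have "\<dots> = int s ^ Suc k - 1" using that by (simp add: algebra_simps of_nat_diff)
  finally show ?case .
qed

lemma hs_coprime: "coprime a b \<Longrightarrow> coprime (hs s a) (hs s b)"
proof (induct "a + b" arbitrary: a b rule: less_induct)
  case less
  show ?case
  proof (cases "a = 0 \<or> b = 0")
    case True
    then have "a = 1 \<or> b = 1" using less.prems by auto
    then show ?thesis by (auto simp: hs_def)
  next
    case False
    show ?thesis
    proof (cases "b \<le> a")
      case True
      then obtain c where c: "a = b + c" using le_Suc_ex by blast
      have "gcd a b = gcd c b" unfolding c by (metis gcd_add1 add.commute)
      then have cp: "coprime c b" using less.prems by (simp add: coprime_iff_gcd_eq_1)
      have "c < a" using c False by auto
      then have ih: "coprime (hs s c) (hs s b)" using less.hyps[of c b] cp c False by auto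
      obtain b' where b': "b = Suc b'" using False by (cases b) auto
      have "gcd s (hs s b) = 1" unfolding b' hs_Suc
        by (metis gcd_add_mult gcd_1_nat add.commute mult.commute)
      then have "coprime s (hs s b)" by (simp add: coprime_iff_gcd_eq_1)
      then have "coprime (s ^ b * hs s c) (hs s b)" using ih by simp
      then have "coprime (hs s b + s ^ b * hs s c) (hs s b)"
        by (metis add.commute gcd_add1 coprime_iff_gcd_eq_1)
      then show ?thesis by (simp add: c hs_add)
    next
      case nle: False
      then obtain c where c: "b = a + c" using le_Suc_ex[of a b] by auto
      have "gcd a b = gcd a c" unfolding c by (metis gcd_add2)
      then have cp: "coprime a c" using less.prems by (simp add: coprime_iff_gcd_eq_1)
      have "c < b" using c False by auto
      then have ih: "coprime (hs s a) (hs s c)" using less.hyps[of a c] cp c False by auto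
      obtain a' where a': "a = Suc a'" using False by (cases a) auto
      have "gcd s (hs s a) = 1" unfolding a' hs_Suc
        by (metis gcd_add_mult gcd_1_nat add.commute mult.commute)
      then have "coprime s (hs s a)" by (simp add: coprime_iff_gcd_eq_1)
      then have "coprime (hs s a) (s ^ a * hs s c)" using ih by (simp add: coprime_commute)
      then have "coprime (hs s a) (hs s a + s ^ a * hs s c)"
        by (metis gcd_add2 coprime_iff_gcd_eq_1)
      then show ?thesis by (simp add: c hs_add)
    qed
  qed
qed

lemma nt_main:
  fixes s n m d r :: nat
  assumes "s \<ge> 2" "prime n" "r + d * s ^ n = d + r * s ^ m" "\<not> n dvd m"
  shows "hs s n dvd r"
proof -
  have cp: "coprime (hs s n) (hs s m)"
    using assms(2,4) hs_coprime prime_imp_coprime by blast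
  have e: "int d * (int s ^ n - 1) = int r * (int s ^ m - 1)"
    using arg_cong[OF assms(3), of int] by (simp add: algebra_simps)
  have "int (s - 1) * (int (hs s n) * int d) = (int (s - 1) * int (hs s n)) * int d" by simp
  also have "\<dots> = int d * (int s ^ n - 1)" using hs_int[of s n] assms(1) by simp
  also have "\<dots> = int r * (int s ^ m - 1)" by (rule e)
  also have "\<dots> = (int (s - 1) * int (hs s m)) * int r" using hs_int[of s m] assms(1) by simp
  finally have "int (s - 1) * (int (hs s n) * int d) = int (s - 1) * (int (hs s m) * int r)" by simp
  then have "hs s n * d = hs s m * r" using assms(1) by (simp flip: of_nat_mult)
  then have "hs s n dvd hs s m * r" by (metis dvd_triv_left)
  then show ?thesis using cp coprime_dvd_mult_right_iff by blast
qed

lemma tiny: fixes a b t :: nat assumes "a * t + b = b * t + a" "t > 1" shows "a = b"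
proof (rule ccontr)
  assume ne: "a \<noteq> b"
  have "int a * (int t - 1) = int b * (int t - 1)"
    using arg_cong[OF assms(1), of int] by (simp add: algebra_simps)
  then show False using ne assms(2) by simp
qed



context ore begin
lemma M_diff_left: "M (f - g) h = M f h - M g h"
  using M_add_left[of "f - g" g h] by (simp add: eq_diff_eq)
lemma M_diff_right: "M f (g - h) = M f g - M f h"
  using M_add_right[of f "g - h" h] by (simp add: eq_diff_eq)
abbreviation Pw where "Pw P k \<equiv> ore_pow \<sigma> \<delta> P k"
lemma pow_comm: "M P (Pw P k) = M (Pw P k) P"
proof (induct k)
  case 0 then show ?case by (simp add: M_one_left M_one_right)
next
  case (Suc k)
  have "M (Pw P (Suc k)) P = M P (M (Pw P k) P)" by (simp add: M_assoc)
  then show ?case using Suc by simp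
qed
end

context ore2 begin

lemma pow_deg: assumes "P \<noteq> 0"
  shows "Pw P k \<noteq> 0 \<and> degree (Pw P k) = k * degree P"
proof (induct k)
  case 0 then show ?case by simp
next
  case (Suc k)
  then have "degree (M P (Pw P k)) = degree P + degree (Pw P k) \<and>
     lead_coeff (M P (Pw P k)) = lead_coeff P * S (degree P) (lead_coeff (Pw P k))"
    using M_deg[OF assms] by blast
  moreover have "lead_coeff P * S (degree P) (lead_coeff (Pw P k)) \<noteq> 0"
  proof -
    have "lead_coeff (Pw P k) \<noteq> 0" using Suc by (metis leading_coeff_0_iff)
    then have "S (degree P) (lead_coeff (Pw P k)) \<noteq> 0" by (rule S_nz)
    then show ?thesis using assms by simp
  qed
  ultimately have "M P (Pw P k) \<noteq> 0 \<and> degree (M P (Pw P k)) = Suc k * degree P"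
    using Suc by (metis leading_coeff_0_iff add.commute mult_Suc)
  then show ?case by simp
qed

lemma comm_lead: assumes "P \<noteq> 0" "Q \<noteq> 0" "M P Q = M Q P"
  shows "lead_coeff P * S (degree P) (lead_coeff Q) = lead_coeff Q * S (degree Q) (lead_coeff P)"
proof -
  have "lead_coeff (M P Q) = lead_coeff (M Q P)" using assms(3) by simp
  then show ?thesis using M_deg[OF assms(1,2)] M_deg[OF assms(2,1)] by metis
qed

lemma lead_deg_eq: assumes "p \<noteq> 0" "q \<noteq> 0" "p * S n q = q * S m p"
  shows "degree p + degree q * s ^ n = degree q + degree p * s ^ m"
proof -
  have "degree (p * S n q) = degree (q * S m p)" using assms(3) by simp
  moreover have "degree (p * S n q) = degree p + degree q * s ^ n"
    using assms(1) S_nz[OF assms(2)] by (simp add: degree_mult_eq S_deg)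
  moreover have "degree (q * S m p) = degree q + degree p * s ^ m"
    using assms(2) S_nz[OF assms(1)] by (simp add: degree_mult_eq S_deg)
  ultimately show ?thesis by simp
qed

lemma uniq: assumes "p \<noteq> 0" "q1 \<noteq> 0" "q2 \<noteq> 0" "n \<ge> 1"
  and e1: "p * S n q1 = q1 * S m p" and e2: "p * S n q2 = q2 * S m p"
  shows "\<exists>c. q1 = smult c q2"
proof -
  have "p * (S n q1 * q2) = p * (q1 * S n q2)"
  proof -
    have "p * (S n q1 * q2) = q1 * S m p * q2" using e1 by (metis mult.assoc)
    also have "\<dots> = q1 * (p * S n q2)" using e2 by (simp add: mult_ac)
    finally show ?thesis by (simp add: mult_ac)
  qed
  then have key: "S n q1 * q2 = q1 * S n q2" using assms(1) by simp
  have sn: "s ^ n > 1" using sdeg assms(4) by (intro one_less_power) auto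
  have "degree q1 = degree q2"
    using lead_deg_eq[OF assms(1,2) e1] lead_deg_eq[OF assms(1,3) e2] sn tiny[of "degree q1" "s ^ n" "degree q2"]
    by simp
  define c where "c = lead_coeff q1 / lead_coeff q2"
  define r where "r = q1 - smult c q2"
  have keyr: "S n r * q2 = r * S n q2"
    unfolding r_def using key by (simp add: S_diff S_smult algebra_simps)
  have cr: "coeff r (degree q1) = 0"
    unfolding r_def c_def using \<open>degree q1 = degree q2\<close> assms(3) by simp
  have dr: "degree r \<le> degree q1"
    unfolding r_def using \<open>degree q1 = degree q2\<close>
    by (intro degree_diff_le) auto
  have "r = 0"
  proof (rule ccontr)
    assume rnz: "r \<noteq> 0"
    have lt: "degree r < degree q1" using dr cr rnz
      by (metis le_neq_implies_less leading_coeff_0_iff)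
    have "degree (S n r * q2) = degree (r * S n q2)" using keyr by simp
    then have "degree r * s ^ n + degree q2 = degree r + degree q2 * s ^ n"
      using rnz assms(3) S_nz[OF rnz, of n] S_nz[OF assms(3), of n] by (simp add: degree_mult_eq S_deg)
    then have "degree r = degree q2" using tiny[of "degree r" "s ^ n" "degree q2"] sn by simp
    then show False using lt \<open>degree q1 = degree q2\<close> by simp
  qed
  then show ?thesis unfolding r_def by auto
qed

end


context ore begin
lemma Kp_sub: "ore_Kpoly_in \<sigma> \<delta> P \<subseteq> ore_centralizer \<sigma> \<delta> P"
proof
  fix Q assume "Q \<in> ore_Kpoly_in \<sigma> \<delta> P"
  then obtain c N where Q: "Q = (\<Sum>i<N. smult [:c i:] (Pw P i))" unfolding ore_Kpoly_in_def by blast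
  have "M P Q = (\<Sum>i<N. smult [:c i:] (M P (Pw P i)))" unfolding Q by (simp add: M_sum_right M_smult_right)
  also have "\<dots> = (\<Sum>i<N. smult [:c i:] (M (Pw P i) P))" by (simp add: pow_comm)
  also have "\<dots> = M Q P" unfolding Q by (simp add: M_sum_left M_smult_left)
  finally show "Q \<in> ore_centralizer \<sigma> \<delta> P" unfolding ore_centralizer_def by simp
qed

lemma Kp_add: assumes "Q \<in> ore_Kpoly_in \<sigma> \<delta> P"
  shows "Q + smult [:a:] (Pw P k) \<in> ore_Kpoly_in \<sigma> \<delta> P"
proof -
  obtain c N where Q: "Q = (\<Sum>i<N. smult [:c i:] (Pw P i))" using assms unfolding ore_Kpoly_in_def by blast
  define N' where "N' = max N (Suc k)"
  define c' where "c' i = (if i < N then c i else 0) + (if i = k then a else 0)" for i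
  have "(\<Sum>i<N'. smult [:c' i:] (Pw P i)) = (\<Sum>i<N'. smult [:if i < N then c i else 0:] (Pw P i))
     + (\<Sum>i<N'. smult [:if i = k then a else 0:] (Pw P i))"
  proof -
    have e: "smult [:x + y:] p = smult [:x:] p + smult [:y:] p" for x y and p :: "'a poly poly"
    proof -
      have "[:x + y:] = [:x:] + [:y:]" by simp
      then show ?thesis by (metis smult_add_left)
    qed
    show ?thesis unfolding c'_def e by (simp add: sum.distrib)
  qed
  also have "(\<Sum>i<N'. smult [:if i < N then c i else 0:] (Pw P i)) = Q"
    unfolding Q N'_def by (rule sum.mono_neutral_cong_right) auto
  also have "(\<Sum>i<N'. smult [:if i = k then a else 0:] (Pw P i)) = smult [:a:] (Pw P k)"
    by (subst sum.remove[of _ k]) (auto simp: N'_def intro!: sum.neutral)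
  finally have "Q + smult [:a:] (Pw P k) = (\<Sum>i<N'. smult [:c' i:] (Pw P i))" by simp
  then show ?thesis unfolding ore_Kpoly_in_def by blast
qed
end

context ore2 begin

lemma main_sub:
  assumes n: "degree P = n" and pr: "prime n" and nd: "\<not> hs s n dvd degree (lead_coeff P)"
  shows "ore_centralizer \<sigma> \<delta> P \<subseteq> ore_Kpoly_in \<sigma> \<delta> P"
proof -
  have n1: "n \<ge> 2" using pr prime_ge_2_nat by blast
  have P0: "P \<noteq> 0" using n n1 by auto
  have s2: "s \<ge> 2" using sdeg by simp
  have "Q \<in> ore_Kpoly_in \<sigma> \<delta> P" if "Q \<in> ore_centralizer \<sigma> \<delta> P" for Q
    using that
  proof (induct "degree Q" arbitrary: Q rule: less_induct)
    case less
    show ?case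
    proof (cases "Q = 0")
      case True
      then show ?thesis unfolding ore_Kpoly_in_def by (auto intro!: exI[of _ 0])
    next
      case Q0: False
      define m where "m = degree Q"
      have cQ: "M P Q = M Q P" using less.prems unfolding ore_centralizer_def by simp
      have e1: "lead_coeff P * S n (lead_coeff Q) = lead_coeff Q * S m (lead_coeff P)"
        using comm_lead[OF P0 Q0 cQ] n m_def by simp
      have lP: "lead_coeff P \<noteq> 0" "lead_coeff Q \<noteq> 0" using P0 Q0 by auto
      have "degree (lead_coeff P) + degree (lead_coeff Q) * s ^ n = degree (lead_coeff Q) + degree (lead_coeff P) * s ^ m"
        by (rule lead_deg_eq[OF lP e1])
      then have "n dvd m" using nt_main[OF s2 pr] nd by blast
      then obtain k where k: "m = n * k" by blast
      define Pk where "Pk = Pw P k"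
      have Pk: "Pk \<noteq> 0" "degree Pk = m" using pow_deg[OF P0, of k] k n unfolding Pk_def by auto
      have cPk: "M P Pk = M Pk P" unfolding Pk_def by (rule pow_comm)
      have lPk: "lead_coeff Pk \<noteq> 0" using Pk by (metis leading_coeff_0_iff)
      have e2: "lead_coeff P * S n (lead_coeff Pk) = lead_coeff Pk * S m (lead_coeff P)"
        using comm_lead[OF P0 Pk(1) cPk] n Pk by simp
      obtain c where c: "lead_coeff Q = smult c (lead_coeff Pk)"
        using uniq[OF lP(1) lP(2) lPk _ e1 e2] n1 by auto
      define Q' where "Q' = Q - smult [:c:] Pk"
      have Q'c: "Q' \<in> ore_centralizer \<sigma> \<delta> P"
        using cQ cPk unfolding Q'_def ore_centralizer_def
        by (simp add: M_diff_left M_diff_right M_smult_left M_smult_right)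
      have cm: "coeff Q' m = 0" unfolding Q'_def using c Pk m_def by simp
      have dm: "degree Q' \<le> m" unfolding Q'_def using Pk m_def by (intro degree_diff_le) auto
      have Q'K: "Q' \<in> ore_Kpoly_in \<sigma> \<delta> P"
      proof (cases "Q' = 0")
        case True
        then show ?thesis unfolding ore_Kpoly_in_def by (auto intro!: exI[of _ 0])
      next
        case False
        then have "degree Q' < degree Q" using cm dm m_def
          by (metis le_neq_implies_less leading_coeff_0_iff)
        then show ?thesis using less.hyps Q'c by blast
      qed
      have "Q = Q' + smult [:c:] (Pw P k)" unfolding Q'_def Pk_def by simp
      then show ?thesis using Kp_add[OF Q'K] by simp
    qed
  qed
  then show ?thesis by blast
qed

end

theorem proposition5p3:
  fixes \<sigma> \<delta> :: "'a::field poly \<Rightarrow> 'a poly"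
    and P :: "'a poly poly"
    and n :: nat
  assumes "ore_endo \<sigma>"
    and "degree (\<sigma> [:0, 1:]) > 1"
    and "ore_sigma_derivation \<sigma> \<delta>"
    and "degree P = n"
    and "prime n"
    and "\<not> ((\<Sum>i<n. degree (\<sigma> [:0, 1:]) ^ i) dvd degree (lead_coeff P))"
  shows "ore_centralizer \<sigma> \<delta> P = ore_Kpoly_in \<sigma> \<delta> P"
proof -
  interpret ore2 \<sigma> \<delta> using assms by unfold_locales (auto simp: ore_endo_def ore_sigma_derivation_def)
  show ?thesis using main_sub[OF assms(4,5)] assms(6) Kp_sub unfolding hs_def by blast
qed


end
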